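(* Let $A\in M_n(R)$ be a non-singular triangular matrix, and write $f_A(x)=\sum_{k=0}^n a_kx^k$, $f_{A^\nabla}(x)=\sum_{k=0}^n b_kx^k$. Then $\det(A)f_{A^\nabla}(x)=x^nf_A(x^{-1})$, i.e. $\det(A)b_k=a_{n-k}$ for all $k=0,\dots,n$.
   Context: Supertropical semiring $R=T\cup G\cup\{-\infty\}$: $T=\mathcal G$ an ordered abelian group (tangible), $G=\{a^\nu\}$ a copy (ghost); $a+b$ is the element of larger $\nu$-value if the $\nu$-values differ and $a^\nu$ if equal; multiplication adds $\nu$-values, is ghost if a factor is ghost, $-\infty$ absorbing; $0_R=-\infty$, $1_R=0$. $\det(A)=\sum_{\sigma\in S_n}\prod_i a_{i,\sigma(i)}$; $A$ non-singular iff $\det(A)\in T$. $\operatorname{adj}(A)_{i,j}=\det(A_{j,i})$; $A^\nabla=\det(A)^{-1}\operatorname{adj}(A)$. Triangular means all entries above (or all below) the diagonal equal $0_R$. The characteristic polynomial $f_M(x)=\det(xI+M)$ has $x^k$-coefficient the sum of determinants of all $(n-k)\times(n-k)$ principal submatrices of $M$; $x^nf_A(x^{-1})$ denotes the polynomial $\sum_{k=0}^n a_{n-k}x^k$. *)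

theory Defs
  imports "HOL-Combinatorics.Permutations"
begin

text \<open>Supertropical semiring over an ordered abelian group 'a (written additively):
  tangible elements Tan a, ghost elements Gh a (= a^nu), and the zero NegInf (= -infinity).\<close>

datatype 'a st = Tan 'a | Gh 'a | NegInf

fun nuval :: "'a st \<Rightarrow> 'a" where
  "nuval (Tan a) = a" | "nuval (Gh a) = a" | "nuval NegInf = undefined"

definition is_tangible :: "'a st \<Rightarrow> bool" where
  "is_tangible x \<longleftrightarrow> (\<exists>a. x = Tan a)"

instantiation st :: (linordered_ab_group_add) comm_monoid_add
begin
definition zero_st :: "'a st" where "zero_st = NegInf"
definition plus_st :: "'a st \<Rightarrow> 'a st \<Rightarrow> 'a st" where
  "plus_st x y = (if x = NegInf then y else if y = NegInf then x
      else if nuval y < nuval x then x else if nuval x < nuval y then y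
      else Gh (nuval x))"
instance
proof
  fix a b c :: "'a st"
  show "a + b + c = a + (b + c)"
    by (cases a; cases b; cases c) (auto simp: plus_st_def)
  show "a + b = b + a"
    by (cases a; cases b) (auto simp: plus_st_def)
  show "0 + a = a" by (simp add: plus_st_def zero_st_def)
qed
end

instantiation st :: (linordered_ab_group_add) comm_monoid_mult
begin
definition one_st :: "'a st" where "one_st = Tan 0"
fun times_st :: "'a st \<Rightarrow> 'a st \<Rightarrow> 'a st" where
  "times_st NegInf y = NegInf"
| "times_st x NegInf = NegInf"
| "times_st (Tan a) (Tan b) = Tan (a + b)"
| "times_st x y = Gh (nuval x + nuval y)"
instance
proof
  fix a b c :: "'a st"
  show "a * b * c = a * (b * c)"
    by (cases a; cases b; cases c) (auto simp: ac_simps)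
  show "a * b = b * a"
    by (cases a; cases b) (auto simp: ac_simps)
  show "1 * a = a" by (cases a) (auto simp: one_st_def)
qed
end

fun st_inv :: "'a::linordered_ab_group_add st \<Rightarrow> 'a st" where
  "st_inv (Tan a) = Tan (- a)" | "st_inv x = undefined"

text \<open>n x n matrices are functions nat => nat => 'a st, only entries with indices < n matter.\<close>
type_synonym 'a stmat = "nat \<Rightarrow> nat \<Rightarrow> 'a st"

text \<open>Determinant (permanent-like sum) of the submatrix with rows/columns indexed by S.\<close>
definition det_on :: "nat set \<Rightarrow> 'a::linordered_ab_group_add stmat \<Rightarrow> 'a st" where
  "det_on S A = (\<Sum>\<sigma> \<in> {\<sigma>. \<sigma> permutes S}. \<Prod>i\<in>S. A i (\<sigma> i))"

definition st_det :: "nat \<Rightarrow> 'a::linordered_ab_group_add stmat \<Rightarrow> 'a st" where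
  "st_det n A = det_on {..<n} A"

definition nonsingular :: "nat \<Rightarrow> 'a::linordered_ab_group_add stmat \<Rightarrow> bool" where
  "nonsingular n A \<longleftrightarrow> is_tangible (st_det n A)"

text \<open>Minor A_{j,i}: delete row j and column i (reindexed to 0..n-2).\<close>
definition minor :: "'a stmat \<Rightarrow> nat \<Rightarrow> nat \<Rightarrow> 'a stmat" where
  "minor A j i = (\<lambda>r c. A (if r < j then r else r + 1) (if c < i then c else c + 1))"

definition st_adj :: "nat \<Rightarrow> 'a::linordered_ab_group_add stmat \<Rightarrow> 'a stmat" where
  "st_adj n A = (\<lambda>i j. st_det (n - 1) (minor A j i))"

definition quasi_inv :: "nat \<Rightarrow> 'a::linordered_ab_group_add stmat \<Rightarrow> 'a stmat" where
  "quasi_inv n A = (\<lambda>i j. st_inv (st_det n A) * st_adj n A i j)"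

definition triangular :: "nat \<Rightarrow> 'a::linordered_ab_group_add stmat \<Rightarrow> bool" where
  "triangular n A \<longleftrightarrow>
     (\<forall>i<n. \<forall>j<n. i < j \<longrightarrow> A i j = 0) \<or> (\<forall>i<n. \<forall>j<n. j < i \<longrightarrow> A i j = 0)"

text \<open>x^k coefficient of the characteristic polynomial f_M(x) = det(xI + M):
  the sum of determinants of all (n-k) x (n-k) principal submatrices of M.\<close>
definition char_coeff :: "nat \<Rightarrow> 'a::linordered_ab_group_add stmat \<Rightarrow> nat \<Rightarrow> 'a st" where
  "char_coeff n M k = (\<Sum>S \<in> {S. S \<subseteq> {..<n} \<and> card S = n - k}. det_on S M)"

end

theory Submission
  imports Defs
begin

lemma zero_times_st[simp]: "(0::'a::linordered_ab_group_add st) * x = 0"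
  by (simp add: zero_st_def)

lemma prod_zero_st:
  assumes "finite S" "i \<in> S" "f i = (0::'a::linordered_ab_group_add st)"
  shows "prod f S = 0"
proof -
  have "prod f S = f i * prod f (S - {i})" using assms by (simp add: prod.remove)
  then show ?thesis using assms by simp
qed

lemma det_on_tri:
  fixes M :: "'a::linordered_ab_group_add stmat"
  assumes fin: "finite S"
    and tri: "(\<forall>a\<in>S. \<forall>b\<in>S. a < b \<longrightarrow> M a b = 0) \<or> (\<forall>a\<in>S. \<forall>b\<in>S. b < a \<longrightarrow> M a b = 0)"
  shows "det_on S M = (\<Prod>i\<in>S. M i i)"
proof -
  let ?P = "{\<sigma>. \<sigma> permutes S}"
  let ?g = "\<lambda>\<sigma>. \<Prod>i\<in>S. M i (\<sigma> i)"
  have finP: "finite ?P" using fin by (rule finite_permutations)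
  have idP: "id \<in> ?P" by (simp add: permutes_id)
  have z: "?g \<sigma> = 0" if "\<sigma> \<in> ?P - {id}" for \<sigma>
  proof -
    have p: "\<sigma> permutes S" and ne: "\<sigma> \<noteq> id" using that by auto
    from tri show ?thesis
    proof
      assume L: "\<forall>a\<in>S. \<forall>b\<in>S. a < b \<longrightarrow> M a b = 0"
      have "\<not> (\<forall>i\<in>S. \<sigma> i \<le> i)" using permutes_natset_le[OF p] ne by blast
      then obtain i where i: "i \<in> S" "i < \<sigma> i" by (auto simp: not_le)
      have "\<sigma> i \<in> S" using p i(1) by (simp add: permutes_in_image)
      then have "M i (\<sigma> i) = 0" using L i by blast
      then show ?thesis using prod_zero_st[OF fin i(1), where f="\<lambda>i. M i (\<sigma> i)"] by simp
    next
      assume U: "\<forall>a\<in>S. \<forall>b\<in>S. b < a \<longrightarrow> M a b = 0"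
      have "\<not> (\<forall>i\<in>S. \<sigma> i \<ge> i)" using permutes_natset_ge[OF p] ne by blast
      then obtain i where i: "i \<in> S" "\<sigma> i < i" by (auto simp: not_le)
      have "\<sigma> i \<in> S" using p i(1) by (simp add: permutes_in_image)
      then have "M i (\<sigma> i) = 0" using U i by blast
      then show ?thesis using prod_zero_st[OF fin i(1), where f="\<lambda>i. M i (\<sigma> i)"] by simp
    qed
  qed
  have "det_on S M = ?g id + sum ?g (?P - {id})"
    unfolding det_on_def using sum.remove[OF finP idP, of ?g] by simp
  also have "sum ?g (?P - {id}) = 0" using z by (intro sum.neutral) blast
  finally show ?thesis by simp
qed

lemma shift_sum:
  assumes "i < (n::nat)"
  shows "(\<Sum>c<n-1. (if c < i then c else Suc c)) + i = (\<Sum>k<n. k)"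
proof -
  let ?h = "\<lambda>c::nat. if c < i then c else Suc c"
  have inj: "inj_on ?h {..<n-1}" by (auto simp: inj_on_def split: if_splits)
  have img: "?h ` {..<n-1} = {..<n} - {i}"
  proof
    show "?h ` {..<n-1} \<subseteq> {..<n} - {i}" using assms by auto
    show "{..<n} - {i} \<subseteq> ?h ` {..<n-1}"
    proof
      fix k assume k: "k \<in> {..<n} - {i}"
      show "k \<in> ?h ` {..<n-1}"
      proof (cases "k < i")
        case True then show ?thesis using k assms by (intro image_eqI[of _ _ k]) auto
      next
        case False then show ?thesis using k assms by (intro image_eqI[of _ _ "k - 1"]) auto
      qed
    qed
  qed
  have "(\<Sum>c<n-1. ?h c) = (\<Sum>k\<in>{..<n} - {i}. k)"
    using sum.reindex[OF inj, of id] img by simp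
  moreover have "(\<Sum>k\<in>{..<n} - {i}. k) + i = (\<Sum>k<n. k)"
    using assms by (simp add: sum.remove add.commute)
  ultimately show ?thesis by simp
qed

lemma shift_inj: "inj_on (\<lambda>c::nat. if c < i then c else Suc c) A"
  by (auto simp: inj_on_def split: if_splits)

lemma shift_img:
  assumes "i < (n::nat)"
  shows "(\<lambda>c::nat. if c < i then c else Suc c) ` {..<n-1} = {..<n} - {i}"
proof
  show "(\<lambda>c::nat. if c < i then c else Suc c) ` {..<n-1} \<subseteq> {..<n} - {i}" using assms by auto
  show "{..<n} - {i} \<subseteq> (\<lambda>c::nat. if c < i then c else Suc c) ` {..<n-1}"
  proof
    fix k assume k: "k \<in> {..<n} - {i}"
    show "k \<in> (\<lambda>c::nat. if c < i then c else Suc c) ` {..<n-1}"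
    proof (cases "k < i")
      case True then show ?thesis using k assms by (intro image_eqI[of _ _ k]) auto
    next
      case False then show ?thesis using k assms by (intro image_eqI[of _ _ "k - 1"]) auto
    qed
  qed
qed

lemma minor_zero:
  fixes A :: "'a::linordered_ab_group_add stmat"
  assumes ij: "i < n" "j < n"
    and tri: "(\<forall>a<n. \<forall>b<n. a < b \<longrightarrow> A a b = 0) \<and> i < j \<or> (\<forall>a<n. \<forall>b<n. b < a \<longrightarrow> A a b = 0) \<and> j < i"
  shows "det_on {..<n-1} (minor A j i) = 0"
  unfolding det_on_def
proof (rule sum.neutral, rule ballI)
  let ?rm = "\<lambda>c::nat. if c < j then c else Suc c"
  let ?cm = "\<lambda>c::nat. if c < i then c else Suc c"
  fix \<sigma> assume "\<sigma> \<in> {\<sigma>. \<sigma> permutes {..<n-1}}"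
  then have p: "\<sigma> permutes {..<n-1}" by simp
  have perm: "(\<Sum>r<n-1. ?cm (\<sigma> r)) = (\<Sum>r<n-1. ?cm r)"
    using sum.permute[OF p, of ?cm] by (simp add: comp_def)
  have si: "(\<Sum>c<n-1. ?cm c) + i = (\<Sum>k<n. k)" using shift_sum[OF ij(1)] .
  have sj: "(\<Sum>c<n-1. ?rm c) + j = (\<Sum>k<n. k)" using shift_sum[OF ij(2)] .
  have lt: "\<sigma> r < n - 1" if "r < n - 1" for r
    using permutes_in_image[OF p, of r] that by (metis lessThan_iff)
  from tri show "(\<Prod>r\<in>{..<n-1}. minor A j i r (\<sigma> r)) = 0"
  proof
    assume L: "(\<forall>a<n. \<forall>b<n. a < b \<longrightarrow> A a b = 0) \<and> i < j"
    have "\<exists>r<n-1. ?rm r < ?cm (\<sigma> r)"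
    proof (rule ccontr)
      assume "\<not> ?thesis"
      then have H: "\<forall>r\<in>{..<n-1}. ?cm (\<sigma> r) \<le> ?rm r" by (meson lessThan_iff not_less)
      have "(\<Sum>r<n-1. ?cm (\<sigma> r)) \<le> (\<Sum>r<n-1. ?rm r)"
        by (rule sum_mono) (use H in blast)
      then show False using perm si sj L by linarith
    qed
    then obtain r where r: "r < n - 1" "?rm r < ?cm (\<sigma> r)" by blast
    have "?rm r < n" "?cm (\<sigma> r) < n" using r lt[OF r(1)] by auto
    then have "minor A j i r (\<sigma> r) = 0" using L r unfolding minor_def by auto
    then show ?thesis using prod_zero_st[where f="\<lambda>r. minor A j i r (\<sigma> r)", of "{..<n-1}" r] r by simp
  next
    assume U: "(\<forall>a<n. \<forall>b<n. b < a \<longrightarrow> A a b = 0) \<and> j < i"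
    have "\<exists>r<n-1. ?cm (\<sigma> r) < ?rm r"
    proof (rule ccontr)
      assume "\<not> ?thesis"
      then have H: "\<forall>r\<in>{..<n-1}. ?rm r \<le> ?cm (\<sigma> r)" by (meson lessThan_iff not_less)
      have "(\<Sum>r<n-1. ?rm r) \<le> (\<Sum>r<n-1. ?cm (\<sigma> r))"
        by (rule sum_mono) (use H in blast)
      then show False using perm si sj U by linarith
    qed
    then obtain r where r: "r < n - 1" "?cm (\<sigma> r) < ?rm r" by blast
    have "?rm r < n" "?cm (\<sigma> r) < n" using r lt[OF r(1)] by auto
    then have "minor A j i r (\<sigma> r) = 0" using U r unfolding minor_def by auto
    then show ?thesis using prod_zero_st[where f="\<lambda>r. minor A j i r (\<sigma> r)", of "{..<n-1}" r] r by simp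
  qed
qed

lemma minor_diag:
  fixes A :: "'a::linordered_ab_group_add stmat"
  assumes i: "i < n" and tri: "triangular n A"
  shows "det_on {..<n-1} (minor A i i) = (\<Prod>k\<in>{..<n}-{i}. A k k)"
proof -
  let ?h = "\<lambda>c::nat. if c < i then c else Suc c"
  have hm: "a < b \<Longrightarrow> ?h a < ?h b" for a b by auto
  have hn: "a < n - 1 \<Longrightarrow> ?h a < n" for a by auto
  have mi: "minor A i i a b = A (?h a) (?h b)" for a b by (simp add: minor_def)
  have "det_on {..<n-1} (minor A i i) = (\<Prod>k<n-1. minor A i i k k)"
  proof (rule det_on_tri)
    show "(\<forall>a\<in>{..<n - 1}. \<forall>b\<in>{..<n - 1}. a < b \<longrightarrow> minor A i i a b = 0) \<or>
      (\<forall>a\<in>{..<n - 1}. \<forall>b\<in>{..<n - 1}. b < a \<longrightarrow> minor A i i a b = 0)"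
      using tri unfolding triangular_def
    proof
      assume L: "\<forall>i<n. \<forall>j<n. i < j \<longrightarrow> A i j = 0"
      have "\<forall>a\<in>{..<n - 1}. \<forall>b\<in>{..<n - 1}. a < b \<longrightarrow> minor A i i a b = 0"
        unfolding mi lessThan_iff using L hm hn by blast
      then show ?thesis ..
    next
      assume U: "\<forall>i<n. \<forall>j<n. j < i \<longrightarrow> A i j = 0"
      have "\<forall>a\<in>{..<n - 1}. \<forall>b\<in>{..<n - 1}. b < a \<longrightarrow> minor A i i a b = 0"
        unfolding mi lessThan_iff using U hm hn by blast
      then show ?thesis ..
    qed
  qed simp
  also have "\<dots> = (\<Prod>k<n-1. A (?h k) (?h k))" by (simp add: mi)
  also have "\<dots> = (\<Prod>k\<in>?h ` {..<n-1}. A k k)"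
    using prod.reindex[OF shift_inj[of i "{..<n-1}"], of "\<lambda>k. A k k"] by simp
  also have "\<dots> = (\<Prod>k\<in>{..<n}-{i}. A k k)" using shift_img[OF i] by simp
  finally show ?thesis .
qed

lemma tan_mult[simp]: "Tan a * Tan b = Tan (a + b)" by simp

lemma is_tangible_mult: "is_tangible (x * y) \<longleftrightarrow> is_tangible x \<and> is_tangible (y::'a::linordered_ab_group_add st)"
  by (cases x; cases y) (auto simp: is_tangible_def)

lemma prod_tan: "finite S \<Longrightarrow> (\<Prod>k\<in>S. Tan (g k)) = (Tan (sum g S) :: 'a::linordered_ab_group_add st)"
  by (induction S rule: finite_induct) (auto simp: one_st_def)

lemma prod_tangible:
  "finite S \<Longrightarrow> is_tangible (prod f S :: 'a::linordered_ab_group_add st) \<Longrightarrow> k \<in> S \<Longrightarrow> is_tangible (f k)"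
  by (induction S rule: finite_induct) (auto simp: is_tangible_mult one_st_def)

lemma tan_distrib: "Tan a * (x + y) = Tan a * x + Tan a * (y::'a::linordered_ab_group_add st)"
  by (cases x; cases y) (auto simp: plus_st_def)

lemma tan_sum_distrib:
  "finite I \<Longrightarrow> Tan a * sum f I = (\<Sum>x\<in>I. Tan a * (f x :: 'a::linordered_ab_group_add st))"
  by (induction I rule: finite_induct) (auto simp: tan_distrib zero_st_def)

theorem mainTheorem10:
  fixes A :: "'a::linordered_ab_group_add stmat" and n :: nat
  assumes "nonsingular n A" and "triangular n A"
  shows "\<forall>k\<le>n. st_det n A * char_coeff n (quasi_inv n A) k = char_coeff n A (n - k)"
proof (intro allI impI)
  fix k assume kn: "k \<le> n"
  define \<alpha> where "\<alpha> k = nuval (A k k)" for k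
  define Q where "Q = quasi_inv n A"
  have triA: "(\<forall>a\<in>T. \<forall>b\<in>T. a < b \<longrightarrow> A a b = 0) \<or> (\<forall>a\<in>T. \<forall>b\<in>T. b < a \<longrightarrow> A a b = 0)"
    if "T \<subseteq> {..<n}" for T
    using assms(2) that unfolding triangular_def by blast
  have dprod: "st_det n A = (\<Prod>k<n. A k k)"
    unfolding st_det_def by (rule det_on_tri) (use triA in auto)
  have diag: "A k k = Tan (\<alpha> k)" if "k < n" for k
  proof -
    have "is_tangible (A k k)"
      using prod_tangible[of "{..<n}" "\<lambda>k. A k k" k] assms(1) that dprod
      unfolding nonsingular_def by simp
    then show ?thesis unfolding \<alpha>_def is_tangible_def by auto
  qed
  have detA: "det_on T A = Tan (sum \<alpha> T)" if T: "T \<subseteq> {..<n}" for T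
  proof -
    have fT: "finite T" using T finite_subset by blast
    have "det_on T A = (\<Prod>k\<in>T. A k k)" using det_on_tri[OF fT triA[OF T]] .
    also have "\<dots> = (\<Prod>k\<in>T. Tan (\<alpha> k))" using T diag by (intro prod.cong) auto
    also have "\<dots> = Tan (sum \<alpha> T)" using prod_tan[OF fT] .
    finally show ?thesis .
  qed
  have d: "st_det n A = Tan (sum \<alpha> {..<n})" unfolding st_det_def using detA by simp
  have Qij: "Q i j = Tan (- sum \<alpha> {..<n}) * det_on {..<n-1} (minor A j i)" for i j
    unfolding Q_def quasi_inv_def st_adj_def d by (simp add: st_det_def)
  have Qdiag: "Q i i = Tan (- \<alpha> i)" if i: "i < n" for i
  proof -
    have "det_on {..<n-1} (minor A i i) = (\<Prod>k\<in>{..<n}-{i}. A k k)"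
      using minor_diag[OF i assms(2)] .
    also have "\<dots> = (\<Prod>k\<in>{..<n}-{i}. Tan (\<alpha> k))" using diag by (intro prod.cong) auto
    also have "\<dots> = Tan (sum \<alpha> ({..<n}-{i}))" by (rule prod_tan) simp
    finally have "Q i i = Tan (- sum \<alpha> {..<n} + sum \<alpha> ({..<n}-{i}))" using Qij by simp
    moreover have "sum \<alpha> {..<n} = \<alpha> i + sum \<alpha> ({..<n}-{i})" using i by (simp add: sum.remove)
    ultimately show ?thesis by (simp add: algebra_simps)
  qed
  have triQ: "(\<forall>a\<in>T. \<forall>b\<in>T. a < b \<longrightarrow> Q a b = 0) \<or> (\<forall>a\<in>T. \<forall>b\<in>T. b < a \<longrightarrow> Q a b = 0)"
    if T: "T \<subseteq> {..<n}" for T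
  proof -
    have z: "Tan a * 0 = (0 :: 'a st)" for a by (simp add: zero_st_def)
    from assms(2) show ?thesis unfolding triangular_def
    proof
      assume L: "\<forall>i<n. \<forall>j<n. i < j \<longrightarrow> A i j = 0"
      have "Q a b = 0" if "a \<in> T" "b \<in> T" "a < b" for a b
        using minor_zero[of a n b A] L that T Qij z by auto
      then show ?thesis by blast
    next
      assume U: "\<forall>i<n. \<forall>j<n. j < i \<longrightarrow> A i j = 0"
      have "Q a b = 0" if "a \<in> T" "b \<in> T" "b < a" for a b
        using minor_zero[of a n b A] U that T Qij z by auto
      then show ?thesis by blast
    qed
  qed
  have detQ: "st_det n A * det_on S Q = Tan (sum \<alpha> ({..<n} - S))" if S: "S \<subseteq> {..<n}" for S
  proof -
    have fS: "finite S" using S finite_subset by blast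
    have "det_on S Q = (\<Prod>k\<in>S. Q k k)" using det_on_tri[OF fS triQ[OF S]] .
    also have "\<dots> = (\<Prod>k\<in>S. Tan (- \<alpha> k))" using S Qdiag by (intro prod.cong) auto
    also have "\<dots> = Tan (sum (\<lambda>k. - \<alpha> k) S)" using prod_tan[OF fS] .
    finally have "st_det n A * det_on S Q = Tan (sum \<alpha> {..<n} - sum \<alpha> S)"
      using d by (simp add: sum_negf)
    also have "sum \<alpha> {..<n} - sum \<alpha> S = sum \<alpha> ({..<n} - S)" using S by (simp add: sum_diff)
    finally show ?thesis .
  qed
  let ?SS = "{S. S \<subseteq> {..<n} \<and> card S = n - k}"
  let ?TT = "{S. S \<subseteq> {..<n} \<and> card S = n - (n - k)}"
  have finSS: "finite ?SS" by (rule finite_subset[of _ "Pow {..<n}"]) auto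
  have "st_det n A * char_coeff n Q k = (\<Sum>S\<in>?SS. st_det n A * det_on S Q)"
    unfolding char_coeff_def d using tan_sum_distrib[OF finSS] by simp
  also have "\<dots> = (\<Sum>S\<in>?SS. Tan (sum \<alpha> ({..<n} - S)))" using detQ by (intro sum.cong) auto
  also have "\<dots> = (\<Sum>T\<in>?TT. Tan (sum \<alpha> T))"
  proof (rule sum.reindex_bij_witness[of _ "\<lambda>T. {..<n} - T" "\<lambda>S. {..<n} - S"])
    fix S assume "S \<in> ?SS"
    then have S: "S \<subseteq> {..<n}" "card S = n - k" by auto
    show "{..<n} - ({..<n} - S) = S" using S by auto
    have "card ({..<n} - S) = n - card S" using S by (simp add: card_Diff_subset finite_subset)
    then show "{..<n} - S \<in> ?TT" using S kn by auto
    show "Tan (sum \<alpha> ({..<n} - S)) = Tan (sum \<alpha> ({..<n} - S))" ..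
  next
    fix T assume "T \<in> ?TT"
    then have T: "T \<subseteq> {..<n}" "card T = n - (n - k)" by auto
    show "{..<n} - ({..<n} - T) = T" using T by auto
    have "card ({..<n} - T) = n - card T" using T by (simp add: card_Diff_subset finite_subset)
    then show "{..<n} - T \<in> ?SS" using T kn by auto
  qed
  also have "\<dots> = char_coeff n A (n - k)"
    unfolding char_coeff_def using detA by (intro sum.cong) auto
  finally show "st_det n A * char_coeff n (quasi_inv n A) k = char_coeff n A (n - k)"
    unfolding Q_def .
qed

end
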